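(* Let $2\le n<\infty$ be an integer and $R=\mathbb{Z}_2\times\cdots\times\mathbb{Z}_2$ ($n$ factors). Then $$\omega(\Gamma'(R))=\chi(\Gamma'(R))=\binom{n}{\lfloor n/2\rfloor}.$$
   Context: All rings are commutative with identity. $W^*(R)$ denotes the set of non-zero non-unit elements of $R$. The cozero-divisor graph $\Gamma'(R)$ is the simple graph with vertex set $W^*(R)$, in which distinct $a,b$ are adjacent iff $a\notin Rb$ and $b\notin Ra$. $\omega(G)$ denotes the clique number and $\chi(G)$ the chromatic number of a graph $G$. *)

theory Defs
  imports "HOL-Analysis.Analysis" "HOL-Library.Z2"
begin

definition nonzero_nonunits :: "'a::comm_ring_1 set" where
  "nonzero_nonunits = {x. x \<noteq> 0 \<and> \<not> x dvd 1}"

definition cozero_adj :: "'a::comm_ring_1 \<Rightarrow> 'a \<Rightarrow> bool" where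
  "cozero_adj a b \<longleftrightarrow> a \<noteq> b \<and> a \<notin> {r * b | r. True} \<and> b \<notin> {r * a | r. True}"

definition is_clique :: "'v set \<Rightarrow> ('v \<Rightarrow> 'v \<Rightarrow> bool) \<Rightarrow> 'v set \<Rightarrow> bool" where
  "is_clique V E C \<longleftrightarrow> C \<subseteq> V \<and> (\<forall>x\<in>C. \<forall>y\<in>C. x \<noteq> y \<longrightarrow> E x y)"

definition clique_number :: "'v set \<Rightarrow> ('v \<Rightarrow> 'v \<Rightarrow> bool) \<Rightarrow> nat" where
  "clique_number V E = Sup {card C | C. finite C \<and> is_clique V E C}"

definition proper_colouring :: "'v set \<Rightarrow> ('v \<Rightarrow> 'v \<Rightarrow> bool) \<Rightarrow> nat \<Rightarrow> ('v \<Rightarrow> nat) \<Rightarrow> bool" where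
  "proper_colouring V E k f \<longleftrightarrow>
     (\<forall>x\<in>V. f x < k) \<and> (\<forall>x\<in>V. \<forall>y\<in>V. x \<noteq> y \<longrightarrow> E x y \<longrightarrow> f x \<noteq> f y)"

definition chromatic_number :: "'v set \<Rightarrow> ('v \<Rightarrow> 'v \<Rightarrow> bool) \<Rightarrow> nat" where
  "chromatic_number V E = (LEAST k. \<exists>f. proper_colouring V E k f)"

end

theory Submission
  imports Defs
begin


definition elems :: "'a set \<times> 'a list \<Rightarrow> 'a set set" where
  "elems c = {fst c \<union> set (take j (snd c)) | j. j \<le> length (snd c)}"

definition valid :: "'a set \<Rightarrow> 'a set \<times> 'a list \<Rightarrow> bool" where
  "valid S c \<longleftrightarrow> fst c \<subseteq> S \<and> set (snd c) \<subseteq> S \<and> distinct (snd c)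
     \<and> fst c \<inter> set (snd c) = {} \<and> 2 * card (fst c) + length (snd c) = card S"

definition scd :: "'a set \<Rightarrow> ('a set \<times> 'a list) set \<Rightarrow> bool" where
  "scd S C \<longleftrightarrow> finite C \<and> (\<forall>c\<in>C. valid S c) \<and> (\<forall>A. A \<subseteq> S \<longrightarrow> (\<exists>c\<in>C. A \<in> elems c))
     \<and> (\<forall>c\<in>C. \<forall>d\<in>C. c \<noteq> d \<longrightarrow> elems c \<inter> elems d = {})"

lemma card_elem:
  assumes "finite B" "distinct ys" "B \<inter> set ys = {}"
  shows "card (B \<union> set (take j ys)) = card B + min j (length ys)"
proof -
  have "B \<inter> set (take j ys) = {}" using assms(3) set_take_subset by fast
  then have "card (B \<union> set (take j ys)) = card B + card (set (take j ys))"
    using assms(1) by (simp add: card_Un_disjoint)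
  moreover have "card (set (take j ys)) = min j (length ys)"
    using assms(2) by (simp add: distinct_card)
  ultimately show ?thesis by simp
qed

lemma take_butlast':
  "j \<le> length xs - 1 \<Longrightarrow> take j (butlast xs) = take j xs"
proof (cases "xs = []")
  case False
  assume "j \<le> length xs - 1"
  then have "j < length xs" using False by (cases xs) auto
  then show ?thesis by (simp add: take_butlast)
qed simp

lemma scd_exists:
  assumes "finite S" shows "\<exists>C. scd S C"
  using assms
proof (induction S rule: finite_induct)
  case empty
  show ?case
    by (rule exI[of _ "{({},[])}"]) (auto simp: scd_def valid_def elems_def)
next
  case (insert x S)
  then obtain C where C: "scd S C" by blast
  define f1 where "f1 = (\<lambda>c::'a set \<times> 'a list. (fst c, snd c @ [x]))"
  define f2 where "f2 = (\<lambda>c::'a set \<times> 'a list. (insert x (fst c), butlast (snd c)))"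
  define C' where "C' = f1 ` C \<union> f2 ` {c\<in>C. snd c \<noteq> []}"
  have fin: "finite C" and val: "\<And>c. c\<in>C \<Longrightarrow> valid S c"
    and cov: "\<And>A. A \<subseteq> S \<Longrightarrow> \<exists>c\<in>C. A \<in> elems c"
    and dis: "\<And>c d. c\<in>C \<Longrightarrow> d\<in>C \<Longrightarrow> c \<noteq> d \<Longrightarrow> elems c \<inter> elems d = {}"
    using C unfolding scd_def by blast+
  have cS: "card (insert x S) = card S + 1" using insert by simp
  have v1: "valid (insert x S) (f1 c)" if "c \<in> C" for c
    using val[OF that] insert(2) cS unfolding valid_def f1_def by auto
  have v2: "valid (insert x S) (f2 c)" if "c \<in> C" "snd c \<noteq> []" for c
  proof -
    have v: "valid S c" using val[OF that(1)] .
    have "finite (fst c)" using v insert(1) finite_subset unfolding valid_def by blast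
    moreover have "x \<notin> fst c" using v insert(2) unfolding valid_def by auto
    moreover have "x \<notin> set (butlast (snd c))" using v insert(2) in_set_butlastD unfolding valid_def by fast
    moreover have "set (butlast (snd c)) \<subseteq> set (snd c)" by (meson in_set_butlastD subsetI)
    moreover have "2 * card (insert x (fst c)) + length (butlast (snd c)) = card (insert x S)"
    proof -
      have "length (snd c) \<ge> 1" using \<open>snd c \<noteq> []\<close> by (cases "snd c") auto
      then show ?thesis using v cS \<open>finite (fst c)\<close> \<open>x \<notin> fst c\<close> unfolding valid_def by simp
    qed
    ultimately show ?thesis using v cS unfolding valid_def f2_def
      by (auto simp: distinct_butlast)
  qed
  have back1: "Z - {x} \<in> elems c" if cC: "c \<in> C" and ZZ: "Z \<in> elems (f1 c)" for c Z
  proof -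
    have v: "valid S c" using val[OF cC] .
    obtain j where j: "j \<le> length (snd c) + 1" "Z = fst c \<union> set (take j (snd c @ [x]))"
      using ZZ unfolding elems_def f1_def by auto
    show ?thesis
    proof (cases "j \<le> length (snd c)")
      case True
      then have "Z = fst c \<union> set (take j (snd c))" using j by simp
      moreover have "x \<notin> fst c \<union> set (take j (snd c))"
        using v insert(2) set_take_subset unfolding valid_def by fast
      ultimately show ?thesis using True unfolding elems_def by auto
    next
      case False
      then have "j = length (snd c) + 1" using j by simp
      then have "Z = insert x (fst c \<union> set (snd c))" using j by simp
      moreover have "x \<notin> fst c \<union> set (snd c)" using v insert(2) unfolding valid_def by auto
      ultimately have "Z - {x} = fst c \<union> set (take (length (snd c)) (snd c))" by simp
      then show ?thesis unfolding elems_def by (intro CollectI exI[of _ "length (snd c)"]) simp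
    qed
  qed
  have back2: "Z - {x} \<in> elems c" if cC: "c \<in> C" and ZZ: "Z \<in> elems (f2 c)" for c Z
  proof -
    have v: "valid S c" using val[OF cC] .
    obtain j where j: "j \<le> length (snd c) - 1" "Z = insert x (fst c) \<union> set (take j (butlast (snd c)))"
      using ZZ unfolding elems_def f2_def by auto
    have "take j (butlast (snd c)) = take j (snd c)"
      using j(1) by (simp add: take_butlast')
    then have "Z = insert x (fst c \<union> set (take j (snd c)))" using j by simp
    moreover have "x \<notin> fst c \<union> set (take j (snd c))"
      using v insert(2) set_take_subset unfolding valid_def by fast
    ultimately have "Z - {x} = fst c \<union> set (take j (snd c))" by simp
    then show ?thesis using j(1) unfolding elems_def by auto
  qed
  have card1: "x \<in> Z \<Longrightarrow> card Z = card (fst c) + length (snd c) + 1" if cC: "c \<in> C" and ZZ: "Z \<in> elems (f1 c)" for c Z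
  proof -
    have v: "valid S c" using val[OF cC] .
    have fb: "finite (fst c)" using v insert(1) finite_subset unfolding valid_def by blast
    obtain j where j: "j \<le> length (snd c) + 1" "Z = fst c \<union> set (take j (snd c @ [x]))"
      using ZZ unfolding elems_def f1_def by auto
    assume "x \<in> Z"
    have "x \<notin> fst c \<union> set (snd c)" using v insert(2) unfolding valid_def by auto
    then have "\<not> j \<le> length (snd c)" using \<open>x \<in> Z\<close> j set_take_subset by fastforce
    then have "j = length (snd c) + 1" using j by simp
    then have "Z = insert x (fst c \<union> set (snd c))" using j by simp
    then show ?thesis using \<open>x \<notin> fst c \<union> set (snd c)\<close> fb v unfolding valid_def
      by (simp add: card_Un_disjoint distinct_card)
  qed
  have card2: "card Z \<le> card (fst c) + length (snd c)" if cC: "c \<in> C" and ZZ: "Z \<in> elems (f2 c)" "snd c \<noteq> []" for c Z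
  proof -
    have v: "valid S c" using val[OF cC] .
    have fb: "finite (fst c)" using v insert(1) finite_subset unfolding valid_def by blast
    obtain j where j: "j \<le> length (snd c) - 1" "Z = insert x (fst c) \<union> set (take j (butlast (snd c)))"
      using ZZ unfolding elems_def f2_def by auto
    have "card Z \<le> card (insert x (fst c)) + card (set (take j (butlast (snd c))))"
      unfolding j(2) by (rule card_Un_le)
    also have "\<dots> \<le> card (fst c) + 1 + j"
      using fb by (simp add: card_insert_le card_length order_trans[OF card_length] card_insert_if)
    finally show ?thesis using j(1) \<open>snd c \<noteq> []\<close> by (cases "snd c") auto
  qed
  have "scd (insert x S) C'"
    unfolding scd_def
  proof (intro conjI ballI allI impI)
    show "finite C'" unfolding C'_def using fin by simp
  next
    fix c assume "c \<in> C'" then show "valid (insert x S) c" unfolding C'_def using v1 v2 by auto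
  next
    fix A assume A: "A \<subseteq> insert x S"
    show "\<exists>c\<in>C'. A \<in> elems c"
    proof (cases "x \<in> A")
      case False
      then have "A \<subseteq> S" using A by auto
      then obtain c j where c: "c \<in> C" "j \<le> length (snd c)" "A = fst c \<union> set (take j (snd c))"
        using cov unfolding elems_def by blast
      then have "A = fst (f1 c) \<union> set (take j (snd (f1 c)))" unfolding f1_def by simp
      then have "A \<in> elems (f1 c)" using c(2) unfolding elems_def f1_def by auto
      then show ?thesis using c(1) unfolding C'_def by blast
    next
      case True
      then have "A - {x} \<subseteq> S" using A by auto
      then obtain c j where c: "c \<in> C" "j \<le> length (snd c)" "A - {x} = fst c \<union> set (take j (snd c))"
        using cov unfolding elems_def by blast
      have A': "A = insert x (fst c \<union> set (take j (snd c)))" using c(3) True by blast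
      show ?thesis
      proof (cases "j = length (snd c)")
        case True
        then have "A = fst (f1 c) \<union> set (take (j+1) (snd (f1 c)))" using A' unfolding f1_def by auto
        then have "A \<in> elems (f1 c)" using True unfolding elems_def f1_def
          by (intro CollectI exI[of _ "j+1"]) simp
        then show ?thesis using c(1) unfolding C'_def by blast
      next
        case False
        then have ne: "snd c \<noteq> []" and jl: "j \<le> length (snd c) - 1" using c(2) by auto
        have "take j (butlast (snd c)) = take j (snd c)" using jl by (simp add: take_butlast')
        then have "A = fst (f2 c) \<union> set (take j (snd (f2 c)))" using A' unfolding f2_def by auto
        then have "A \<in> elems (f2 c)" using jl unfolding elems_def f2_def by auto
        then show ?thesis using c(1) ne unfolding C'_def by blast
      qed
    qed
  next
    fix c1 c2 assume c1: "c1 \<in> C'" and c2: "c2 \<in> C'" and ne: "c1 \<noteq> c2"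
    show "elems c1 \<inter> elems c2 = {}"
    proof (rule ccontr)
      assume "elems c1 \<inter> elems c2 \<noteq> {}"
      then obtain Z where Z: "Z \<in> elems c1" "Z \<in> elems c2" by blast
      obtain c where c: "c \<in> C" "c1 = f1 c \<or> (c1 = f2 c \<and> snd c \<noteq> [])" using c1 unfolding C'_def by blast
      obtain d where d: "d \<in> C" "c2 = f1 d \<or> (c2 = f2 d \<and> snd d \<noteq> [])" using c2 unfolding C'_def by blast
      have "Z - {x} \<in> elems c" using c Z(1) back1 back2 by blast
      moreover have "Z - {x} \<in> elems d" using d Z(2) back1 back2 by blast
      ultimately have "c = d" using dis c(1) d(1) by blast
      then have "(c1 = f1 c \<and> c2 = f2 c \<and> snd c \<noteq> []) \<or> (c2 = f1 c \<and> c1 = f2 c \<and> snd c \<noteq> [])"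
        using c d ne by auto
      moreover have False if "Z \<in> elems (f1 c)" "Z \<in> elems (f2 c)" "snd c \<noteq> []"
      proof -
        have "x \<in> Z" using that(2) unfolding elems_def f2_def by auto
        then show False using card1[OF c(1) that(1)] card2[OF c(1) that(2,3)] by simp
      qed
      ultimately show False using Z by blast
    qed
  qed
  then show ?case by blast
qed



lemma elems_comparable:
  assumes "A \<in> elems c" "B \<in> elems c" shows "A \<subseteq> B \<or> B \<subseteq> A"
proof -
  obtain i where i: "A = fst c \<union> set (take i (snd c))" using assms(1) unfolding elems_def by auto
  obtain j where j: "B = fst c \<union> set (take j (snd c))" using assms(2) unfolding elems_def by auto
  show ?thesis
  proof (cases "i \<le> j")
    case True
    then show ?thesis using i j set_take_subset_set_take[OF True, of "snd c"] by blast
  next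
    case False
    then have ji: "j \<le> i" by simp
    show ?thesis using i j set_take_subset_set_take[OF ji, of "snd c"] by blast
  qed
qed

lemma colouring_exists:
  assumes "finite S"
  shows "\<exists>col. (\<forall>A. A \<subseteq> S \<longrightarrow> col A < card S choose (card S div 2))
     \<and> (\<forall>A B. A \<subseteq> S \<longrightarrow> B \<subseteq> S \<longrightarrow> col A = col B \<longrightarrow> A \<subseteq> B \<or> B \<subseteq> A)"
proof -
  obtain C where C: "scd S C" using scd_exists[OF assms] by blast
  have val: "\<And>c. c\<in>C \<Longrightarrow> valid S c"
    and cov: "\<And>A. A \<subseteq> S \<Longrightarrow> \<exists>c\<in>C. A \<in> elems c"
    and dis: "\<And>c d. c\<in>C \<Longrightarrow> d\<in>C \<Longrightarrow> c \<noteq> d \<Longrightarrow> elems c \<inter> elems d = {}"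
    using C unfolding scd_def by blast+
  define n where "n = card S"
  define m where "m = n div 2"
  define L where "L = {B. B \<subseteq> S \<and> card B = m}"
  have finL: "finite L" unfolding L_def using assms by simp
  have cardL: "card L = n choose m" unfolding L_def n_def using n_subsets[OF assms] by simp
  obtain g where g: "bij_betw g L {0..<card L}" using ex_bij_betw_finite_nat[OF finL] by blast
  define mid where "mid = (\<lambda>c::'a set \<times> 'a list. fst c \<union> set (take (m - card (fst c)) (snd c)))"
  have mid: "mid c \<in> elems c \<and> mid c \<in> L" if "c \<in> C" for c
  proof -
    have v: "valid S c" using val[OF that] .
    have fb: "finite (fst c)" using v assms finite_subset unfolding valid_def by blast
    have "2 * card (fst c) + length (snd c) = n" using v unfolding valid_def n_def by simp
    then have le: "m - card (fst c) \<le> length (snd c)" and cm: "card (fst c) \<le> m" unfolding m_def by auto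
    have "card (mid c) = card (fst c) + min (m - card (fst c)) (length (snd c))"
      unfolding mid_def using card_elem[OF fb] v unfolding valid_def by blast
    then have "card (mid c) = m" using le cm by simp
    moreover have "mid c \<subseteq> S" unfolding mid_def using v set_take_subset unfolding valid_def by fast
    moreover have "mid c \<in> elems c" unfolding mid_def elems_def using le by auto
    ultimately show ?thesis unfolding L_def by simp
  qed
  define ch where "ch = (\<lambda>A. SOME c. c \<in> C \<and> A \<in> elems c)"
  have ch: "ch A \<in> C \<and> A \<in> elems (ch A)" if "A \<subseteq> S" for A
    unfolding ch_def using cov[OF that] by (metis (mono_tags, lifting) someI_ex)
  define col where "col = (\<lambda>A. g (mid (ch A)))"
  have "\<forall>A. A \<subseteq> S \<longrightarrow> col A < n choose m"
  proof (intro allI impI)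
    fix A assume A: "A \<subseteq> S"
    have "mid (ch A) \<in> L" using mid ch[OF A] by blast
    then have "g (mid (ch A)) \<in> {0..<card L}" using g unfolding bij_betw_def by blast
    then show "col A < n choose m" unfolding col_def cardL by simp
  qed
  moreover have "\<forall>A B. A \<subseteq> S \<longrightarrow> B \<subseteq> S \<longrightarrow> col A = col B \<longrightarrow> A \<subseteq> B \<or> B \<subseteq> A"
  proof (intro allI impI)
    fix A B assume A: "A \<subseteq> S" and B: "B \<subseteq> S" and e: "col A = col B"
    have "mid (ch A) \<in> L" "mid (ch B) \<in> L" using mid ch[OF A] ch[OF B] by blast+
    then have "mid (ch A) = mid (ch B)"
      using e g unfolding col_def bij_betw_def inj_on_def by blast
    then have "ch A = ch B" using dis[of "ch A" "ch B"] ch[OF A] ch[OF B] mid[of "ch A"] mid[of "ch B"] by auto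
    then show "A \<subseteq> B \<or> B \<subseteq> A" using elems_comparable ch[OF A] ch[OF B] by metis
  qed
  ultimately show ?thesis unfolding n_def m_def by blast
qed



definition supp :: "bit ^ 'n \<Rightarrow> 'n set" where "supp x = {i. x $ i = 1}"

lemma supp_inj: "supp x = supp y \<Longrightarrow> x = y"
  unfolding supp_def vec_eq_iff
  by (metis (mono_tags, lifting) bit_not_one_iff mem_Collect_eq)

lemma supp_vec: "supp (\<chi> i. if i \<in> A then 1 else 0) = A"
  unfolding supp_def by auto

lemma supp_zero: "x = 0 \<longleftrightarrow> supp x = {}"
  unfolding supp_def vec_eq_iff by auto

lemma supp_unit: "(x::bit^'n) dvd 1 \<longleftrightarrow> supp x = UNIV"
proof
  assume "x dvd 1"
  then obtain r where r: "1 = x * r" by (auto elim: dvdE)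
  have "x $ i = 1" for i
  proof -
    have "1 = x $ i * r $ i" using arg_cong[OF r, of "\<lambda>v. v $ i"] by simp
    then show ?thesis by (metis bit_not_one_iff mult_zero_left)
  qed
  then show "supp x = UNIV" unfolding supp_def by auto
next
  assume "supp x = UNIV"
  then have "x = 1" unfolding supp_def vec_eq_iff by auto
  then show "x dvd 1" by simp
qed

lemma supp_mult: "(x::bit^'n) \<in> {r * y | r. True} \<longleftrightarrow> supp x \<subseteq> supp y"
proof
  assume "x \<in> {r * y | r. True}"
  then obtain r where r: "x = r * y" by auto
  show "supp x \<subseteq> supp y"
  proof
    fix i assume "i \<in> supp x"
    then have "r $ i * y $ i = 1" using r unfolding supp_def by simp
    then show "i \<in> supp y" unfolding supp_def by (cases "y $ i = 1") simp_all
  qed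
next
  assume h: "supp x \<subseteq> supp y"
  have "x * y = x" unfolding vec_eq_iff
  proof
    fix i show "(x * y) $ i = x $ i"
      using h unfolding supp_def by (cases "x $ i = 1") auto
  qed
  then show "x \<in> {r * y | r. True}" by (intro CollectI exI[of _ x]) simp
qed

lemma adj_iff: "cozero_adj (a::bit^'n) b \<longleftrightarrow> a \<noteq> b \<and> \<not> supp a \<subseteq> supp b \<and> \<not> supp b \<subseteq> supp a"
  unfolding cozero_adj_def using supp_mult by blast

lemma V_iff: "(x::bit^'n) \<in> nonzero_nonunits \<longleftrightarrow> supp x \<noteq> {} \<and> supp x \<noteq> UNIV"
  by (simp add: nonzero_nonunits_def supp_zero supp_unit)

theorem lemma2p5:
  assumes "CARD('n::finite) \<ge> 2"
  shows "clique_number (nonzero_nonunits :: (bit ^ 'n) set) cozero_adj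
           = CARD('n) choose (CARD('n) div 2)
       \<and> chromatic_number (nonzero_nonunits :: (bit ^ 'n) set) cozero_adj
           = CARD('n) choose (CARD('n) div 2)"
proof -
  define n where "n = CARD('n)"
  define m where "m = n div 2"
  define K where "K = n choose m"
  define V where "V = (nonzero_nonunits :: (bit ^ 'n) set)"
  obtain col where col: "\<And>A. A \<subseteq> (UNIV::'n set) \<Longrightarrow> col A < K"
    and colc: "\<And>A B. A \<subseteq> (UNIV::'n set) \<Longrightarrow> B \<subseteq> UNIV \<Longrightarrow> col A = col B \<Longrightarrow> A \<subseteq> B \<or> B \<subseteq> A"
    using colouring_exists[of "UNIV::'n set"] unfolding K_def m_def n_def by auto
  define f where "f = (\<lambda>x::bit^'n. col (supp x))"
  have fK: "f x < K" for x unfolding f_def using col by simp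
  have fadj: "f x \<noteq> f y" if "cozero_adj x y" for x y
    using that colc unfolding f_def adj_iff by blast
  define Q where "Q = {x::bit^'n. card (supp x) = m}"
  have m1: "1 \<le> m" "m < n" using assms unfolding m_def n_def by auto
  have QV: "Q \<subseteq> V"
  proof
    fix x assume "x \<in> Q"
    then have c: "card (supp x) = m" unfolding Q_def by simp
    then have "supp x \<noteq> {}" using m1 by auto
    moreover have "supp x \<noteq> UNIV" using c m1 unfolding n_def by auto
    ultimately show "x \<in> V" unfolding V_def V_iff by simp
  qed
  have Qclique: "cozero_adj x y" if "x \<in> Q" "y \<in> Q" "x \<noteq> y" for x y
  proof -
    have "supp x \<noteq> supp y" using that supp_inj by blast
    moreover have "card (supp x) = card (supp y)" using that unfolding Q_def by simp
    ultimately have "\<not> supp x \<subseteq> supp y" "\<not> supp y \<subseteq> supp x"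
      by (metis card_subset_eq finite)+
    then show ?thesis using that(3) unfolding adj_iff by blast
  qed
  have img: "supp ` Q = {A. A \<subseteq> (UNIV::'n set) \<and> card A = m}"
  proof (rule set_eqI, rule iffI)
    fix A assume "A \<in> {A. A \<subseteq> (UNIV::'n set) \<and> card A = m}"
    then have "(\<chi> i. if i \<in> A then 1 else 0) \<in> Q" "A = supp (\<chi> i. if i \<in> A then 1 else 0)"
      using supp_vec[of A] unfolding Q_def by auto
    then show "A \<in> supp ` Q" by blast
  qed (auto simp: Q_def)
  have bij: "bij_betw supp Q {A. A \<subseteq> (UNIV::'n set) \<and> card A = m}"
    unfolding bij_betw_def using img supp_inj by (auto simp: inj_on_def)
  have cardQ: "card Q = K"
    using bij_betw_same_card[OF bij] n_subsets[of "UNIV::'n set" m] unfolding K_def n_def by simp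
  have finQ: "finite Q" using bij_betw_finite[OF bij] by simp
  have Qcl: "is_clique V cozero_adj Q" unfolding is_clique_def using QV Qclique by blast
  have bound: "card C \<le> k" if "\<forall>x\<in>C. h x < k" "\<forall>x\<in>C. \<forall>y\<in>C. x \<noteq> y \<longrightarrow> h x \<noteq> h y" for C :: "(bit^'n) set" and h k
  proof -
    have "card C \<le> card {..<k}"
      by (rule card_inj_on_le[of h]) (use that in \<open>auto simp: inj_on_def\<close>)
    then show ?thesis by simp
  qed
  have cn: "clique_number V cozero_adj = K"
    unfolding clique_number_def
  proof (rule cSup_eq_maximum)
    show "K \<in> {card C | C. finite C \<and> is_clique V cozero_adj C}"
      using cardQ finQ Qcl by blast
  next
    fix x assume "x \<in> {card C | C. finite C \<and> is_clique V cozero_adj C}"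
    then obtain C where C: "x = card C" "is_clique V cozero_adj C" by blast
    have cl: "\<forall>x\<in>C. \<forall>y\<in>C. x \<noteq> y \<longrightarrow> cozero_adj x y" using C(2) unfolding is_clique_def by blast
    have "card C \<le> K" by (rule bound[of C f K]) (use fK fadj cl in auto)
    then show "x \<le> K" using C by simp
  qed
  have pc: "proper_colouring V cozero_adj K f" unfolding proper_colouring_def using fK fadj by blast
  have ch: "chromatic_number V cozero_adj = K"
    unfolding chromatic_number_def
  proof (rule Least_equality)
    show "\<exists>f. proper_colouring V cozero_adj K f" using pc by blast
  next
    fix k assume "\<exists>f. proper_colouring V cozero_adj k f"
    then obtain h where h: "proper_colouring V cozero_adj k h" by blast
    have hk: "\<forall>x\<in>V. h x < k" and hd: "\<forall>x\<in>V. \<forall>y\<in>V. x \<noteq> y \<longrightarrow> cozero_adj x y \<longrightarrow> h x \<noteq> h y"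
      using h unfolding proper_colouring_def by blast+
    have q1: "\<forall>x\<in>Q. h x < k" using hk QV by blast
    have q2: "\<forall>x\<in>Q. \<forall>y\<in>Q. x \<noteq> y \<longrightarrow> h x \<noteq> h y"
    proof (intro ballI impI)
      fix x y assume xy: "x \<in> Q" "y \<in> Q" "x \<noteq> y"
      then have "x \<in> V" "y \<in> V" "cozero_adj x y" using QV Qclique by auto
      then show "h x \<noteq> h y" using hd xy(3) by blast
    qed
    have "card Q \<le> k" using bound[OF q1 q2] .
    then show "K \<le> k" using cardQ by simp
  qed
  have "clique_number V cozero_adj = K \<and> chromatic_number V cozero_adj = K" using cn ch by blast
  then show ?thesis unfolding V_def K_def m_def n_def .
qed

end
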